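(* Let $k\ge 2$ be an integer and $\varepsilon>0$. There exist constants $c=c(k,\varepsilon)>0$ and $n_0=n_0(k,\varepsilon)$ such that every graph $G$ on $n\ge n_0$ vertices with \[ q(G)\ge \left(1-\frac{1}{k}+\varepsilon\right)2n \] contains at least $c\,n^{k+1}$ copies of the complete graph $K_{k+1}$.
   Context: All graphs are finite, simple and undirected. For a graph $G$, $D(G)$ is the diagonal matrix of vertex degrees and $A(G)$ is the adjacency matrix; the signless Laplacian is $Q(G)=D(G)+A(G)$, and $q(G)$ denotes the largest eigenvalue of $Q(G)$ (the signless Laplacian spectral radius). $K_{k+1}$ is the complete graph on $k+1$ vertices; a copy of $K_{k+1}$ in $G$ is a set of $k+1$ pairwise adjacent vertices. *)

theory Defs
  imports "Jordan_Normal_Form.Char_Poly"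
begin

definition simple_graph :: "nat \<Rightarrow> (nat \<Rightarrow> nat \<Rightarrow> bool) \<Rightarrow> bool" where
  "simple_graph n E \<longleftrightarrow>
     (\<forall>i<n. \<forall>j<n. E i j \<longleftrightarrow> E j i) \<and> (\<forall>i<n. \<not> E i i)"

definition degree :: "nat \<Rightarrow> (nat \<Rightarrow> nat \<Rightarrow> bool) \<Rightarrow> nat \<Rightarrow> nat" where
  "degree n E i = card {j. j < n \<and> E i j}"

definition adj_matrix :: "nat \<Rightarrow> (nat \<Rightarrow> nat \<Rightarrow> bool) \<Rightarrow> real mat" where
  "adj_matrix n E = mat n n (\<lambda>(i, j). if E i j then 1 else 0)"

definition deg_matrix :: "nat \<Rightarrow> (nat \<Rightarrow> nat \<Rightarrow> bool) \<Rightarrow> real mat" where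
  "deg_matrix n E = mat n n (\<lambda>(i, j). if i = j then real (degree n E i) else 0)"

definition signless_laplacian :: "nat \<Rightarrow> (nat \<Rightarrow> nat \<Rightarrow> bool) \<Rightarrow> real mat" where
  "signless_laplacian n E = deg_matrix n E + adj_matrix n E"

text \<open>q(G): the largest eigenvalue of Q(G) (Q is real symmetric, so all its
eigenvalues are real).\<close>
definition q_radius :: "nat \<Rightarrow> (nat \<Rightarrow> nat \<Rightarrow> bool) \<Rightarrow> real" where
  "q_radius n E = Max {x. eigenvalue (signless_laplacian n E) x}"

definition clique_count :: "nat \<Rightarrow> (nat \<Rightarrow> nat \<Rightarrow> bool) \<Rightarrow> nat \<Rightarrow> nat" where
  "clique_count n E r = card {S. S \<subseteq> {0..<n} \<and> card S = r \<and>
                                  (\<forall>x\<in>S. \<forall>y\<in>S. x \<noteq> y \<longrightarrow> E x y)}"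

end

theory Submission
  imports Defs
begin

lemma SL_carrier: "signless_laplacian n E \<in> carrier_mat n n"
  unfolding signless_laplacian_def deg_matrix_def adj_matrix_def by auto

lemma SL_index: "i < n \<Longrightarrow> j < n \<Longrightarrow> signless_laplacian n E $$ (i,j) =
   (if i = j then real (degree n E i) else 0) + (if E i j then 1 else 0)"
  unfolding signless_laplacian_def deg_matrix_def adj_matrix_def by auto

lemma SL_sym: "simple_graph n E \<Longrightarrow> i < n \<Longrightarrow> j < n \<Longrightarrow>
   signless_laplacian n E $$ (i,j) = signless_laplacian n E $$ (j,i)"
  by (auto simp: SL_index simple_graph_def)

lemma cnj_mult_self: "cnj z * (a * z) = a * complex_of_real ((cmod z)^2)"
proof -
  have h: "cmod z * cmod z = Re z * Re z + Im z * Im z" using cmod_power2[of z] by (simp add: power2_eq_square)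
  show ?thesis by (simp add: complex_eq_iff power2_eq_square h algebra_simps)
qed

lemma real_sym_eigenvalue_exists:
  fixes Q :: "real mat"
  assumes Q: "Q \<in> carrier_mat n n" and n: "n \<ge> 1"
    and sym: "\<And>i j. i < n \<Longrightarrow> j < n \<Longrightarrow> Q $$ (i,j) = Q $$ (j,i)"
  shows "\<exists>r. eigenvalue Q r"
proof -
  define C :: "complex mat" where "C = of_real_hom.mat_hom Q"
  have C: "C \<in> carrier_mat n n" using Q unfolding C_def by auto
  obtain as where as: "char_poly C = (\<Prod>a\<leftarrow>as. [:- a, 1:])" "length as = n"
    using char_poly_factorized[OF C] by blast
  define a where "a = as ! 0"
  have "a \<in> set as" using as(2) n unfolding a_def by auto
  then have "poly (char_poly C) a = 0" unfolding as(1)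
    by (simp add: poly_prod_list_zero_iff)
  then have "eigenvalue C a" using eigenvalue_root_char_poly[OF C] by simp
  then obtain v where v: "v \<in> carrier_vec n" "v \<noteq> 0\<^sub>v n" "C *\<^sub>v v = a \<cdot>\<^sub>v v"
    unfolding eigenvalue_def eigenvector_def using C by auto
  have Cij: "C $$ (i,j) = complex_of_real (Q $$ (i,j))" if "i < n" "j < n" for i j
    using that Q unfolding C_def by auto
  have ev: "a * v $ i = (\<Sum>j<n. complex_of_real (Q $$ (i,j)) * v $ j)" if "i < n" for i
  proof -
    have "(C *\<^sub>v v) $ i = a * v $ i" using v(3) that v(1) by simp
    moreover have "(C *\<^sub>v v) $ i = (\<Sum>j<n. C $$ (i,j) * v $ j)"
      using that C v(1) by (auto simp: scalar_prod_def lessThan_atLeast0 intro!: sum.cong)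
    ultimately show ?thesis using Cij that by auto
  qed
  define s where "s = (\<Sum>i<n. cnj (v $ i) * (a * v $ i))"
  have s2: "s = (\<Sum>i<n. \<Sum>j<n. cnj (v $ i) * complex_of_real (Q $$ (i,j)) * v $ j)"
    unfolding s_def by (auto simp: ev sum_distrib_left mult.assoc intro!: sum.cong)
  have "cnj s = (\<Sum>i<n. \<Sum>j<n. v $ i * complex_of_real (Q $$ (i,j)) * cnj (v $ j))"
    unfolding s2 by (simp add: cnj_sum)
  also have "\<dots> = (\<Sum>j<n. \<Sum>i<n. v $ i * complex_of_real (Q $$ (i,j)) * cnj (v $ j))"
    by (rule sum.swap)
  also have "\<dots> = s" unfolding s2
    by (auto intro!: sum.cong simp: sym mult.commute mult.left_commute)
  finally have cs: "cnj s = s" .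
  define R where "R = (\<Sum>i<n. (cmod (v $ i))^2)"
  have sR: "s = a * complex_of_real R"
    unfolding s_def R_def by (auto simp: sum_distrib_left cnj_mult_self intro!: sum.cong)
  obtain i where i: "i < n" "v $ i \<noteq> 0"
    using v(1,2) by (metis carrier_vecD eq_vecI index_zero_vec(1) index_zero_vec(2))
  have "R > 0" unfolding R_def
    by (rule sum_pos2[of _ i]) (use i in auto)
  have "Im s = 0" using cs by (metis complex_cnj_cancel_iff complex_is_Real_iff Reals_cnj_iff)
  then have "Im a = 0" using sR \<open>R > 0\<close> by simp
  then have aR: "a = complex_of_real (Re a)" by (simp add: complex_eq_iff)
  have "char_poly C = map_poly of_real (char_poly Q)"
    unfolding C_def using of_real_hom.char_poly_hom[OF Q] .
  then have "complex_of_real (poly (char_poly Q) (Re a)) = 0"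
    using \<open>poly (char_poly C) a = 0\<close> aR by (metis of_real_hom.poly_map_poly)
  then have "poly (char_poly Q) (Re a) = 0" by simp
  then show ?thesis using eigenvalue_root_char_poly[OF Q] by blast
qed

lemma q_radius_eigen:
  assumes "simple_graph n E" "n \<ge> 1"
  shows "eigenvalue (signless_laplacian n E) (q_radius n E)"
proof -
  let ?Q = "signless_laplacian n E"
  have Q: "?Q \<in> carrier_mat n n" by (rule SL_carrier)
  have fin: "finite {x. eigenvalue ?Q x}"
  proof -
    have "char_poly ?Q \<noteq> 0" using degree_monic_char_poly[OF Q] by auto
    then have "finite {x. poly (char_poly ?Q) x = 0}" by (rule poly_roots_finite)
    then show ?thesis using eigenvalue_root_char_poly[OF Q] by simp
  qed
  obtain r where "eigenvalue ?Q r"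
    using real_sym_eigenvalue_exists[OF Q assms(2)] SL_sym[OF assms(1)] by blast
  then have "{x. eigenvalue ?Q x} \<noteq> {}" by auto
  from Max_in[OF fin this] show ?thesis unfolding q_radius_def by simp
qed

definition clq :: "(nat \<Rightarrow> nat \<Rightarrow> bool) \<Rightarrow> nat set \<Rightarrow> bool" where
  "clq E C \<longleftrightarrow> (\<forall>a\<in>C. \<forall>b\<in>C. a \<noteq> b \<longrightarrow> E a b)"

definition symS :: "(nat \<Rightarrow> nat \<Rightarrow> bool) \<Rightarrow> nat set \<Rightarrow> bool" where
  "symS E S \<longleftrightarrow> (\<forall>a\<in>S. \<forall>b\<in>S. E a b = E b a) \<and> (\<forall>a\<in>S. \<not> E a a)"

definition cliq_le :: "(nat \<Rightarrow> nat \<Rightarrow> bool) \<Rightarrow> nat set \<Rightarrow> nat \<Rightarrow> bool" where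
  "cliq_le E S k \<longleftrightarrow> (\<forall>C. C \<subseteq> S \<longrightarrow> clq E C \<longrightarrow> card C \<le> k)"

definition tt :: "(nat \<Rightarrow> nat \<Rightarrow> bool) \<Rightarrow> nat set \<Rightarrow> nat \<Rightarrow> nat" where
  "tt E S u = card {v\<in>S. v = u \<or> \<not> E u v}"

definition dd :: "(nat \<Rightarrow> nat \<Rightarrow> bool) \<Rightarrow> nat set \<Rightarrow> nat \<Rightarrow> nat" where
  "dd E S u = card {v\<in>S. E u v}"

definition LL :: "(nat \<Rightarrow> nat \<Rightarrow> bool) \<Rightarrow> nat set \<Rightarrow> (nat \<Rightarrow> real) \<Rightarrow> real" where
  "LL E S y = (\<Sum>u\<in>S. \<Sum>v\<in>S. if E u v then y u * y v else 0)"

definition FF :: "(nat \<Rightarrow> nat \<Rightarrow> bool) \<Rightarrow> nat set \<Rightarrow> (nat \<Rightarrow> real) \<Rightarrow> real" where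
  "FF E S y = (\<Sum>u\<in>S. \<Sum>v\<in>S. if E u v then (y u + y v)^2 else 0)"

definition DD :: "nat set \<Rightarrow> (nat \<Rightarrow> real) \<Rightarrow> real" where
  "DD S y = (\<Sum>u\<in>S. (y u)^2)"

lemma symS_subset: "symS E S \<Longrightarrow> T \<subseteq> S \<Longrightarrow> symS E T"
  unfolding symS_def by blast

lemma cliq_le_subset: "cliq_le E S k \<Longrightarrow> T \<subseteq> S \<Longrightarrow> cliq_le E T k"
  unfolding cliq_le_def by blast

lemma caro_wei:
  assumes "finite S" "symS E S" "cliq_le E S k"
  shows "(\<Sum>u\<in>S. 1 / real (tt E S u)) \<le> real k"
  using assms
proof (induction k arbitrary: S)
  case 0
  have "S = {}"
  proof (rule ccontr)
    assume "S \<noteq> {}"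
    then obtain u where "u \<in> S" by auto
    then have "clq E {u}" "{u} \<subseteq> S" unfolding clq_def by auto
    then have "card {u} \<le> 0" using "0.prems"(3) unfolding cliq_le_def by blast
    then show False by simp
  qed
  then show ?case by simp
next
  case (Suc k)
  show ?case
  proof (cases "S = {}")
    case True then show ?thesis by simp
  next
    case False
    define f where "f = tt E S"
    have "finite (f ` S)" "f ` S \<noteq> {}" using Suc.prems(1) False by auto
    then have "Min (f ` S) \<in> f ` S" by (rule Min_in)
    then obtain u where u: "u \<in> S" "f u = Min (f ` S)" by auto
    have umin: "f u \<le> f w" if "w \<in> S" for w
      using u(2) that Suc.prems(1) by simp
    define T where "T = {v\<in>S. v = u \<or> \<not> E u v}"
    define S' where "S' = {v\<in>S. E u v}"
    have irr: "\<not> E u u" using Suc.prems(2) u(1) unfolding symS_def by auto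
    have ST: "S = T \<union> S'" "T \<inter> S' = {}" unfolding T_def S'_def using irr by auto
    have finT: "finite T" "finite S'" using Suc.prems(1) unfolding T_def S'_def by auto
    have cardT: "card T = f u" unfolding f_def tt_def T_def by simp
    have fpos: "f u > 0" using cardT finT u(1) unfolding T_def
      by (metis (mono_tags, lifting) card_gt_0_iff empty_iff mem_Collect_eq)
    have "(\<Sum>v\<in>T. 1 / real (tt E S v)) \<le> (\<Sum>v\<in>T. 1 / real (f u))"
    proof (rule sum_mono)
      fix v assume "v \<in> T"
      then have "f u \<le> f v" using umin unfolding T_def by auto
      then show "1 / real (tt E S v) \<le> 1 / real (f u)"
        using fpos unfolding f_def by (simp add: frac_le)
    qed
    also have "\<dots> = 1" using cardT fpos by simp
    finally have sT: "(\<Sum>v\<in>T. 1 / real (tt E S v)) \<le> 1" .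
    have "(\<Sum>v\<in>S'. 1 / real (tt E S v)) \<le> (\<Sum>v\<in>S'. 1 / real (tt E S' v))"
    proof (rule sum_mono)
      fix v assume v: "v \<in> S'"
      have "{w\<in>S'. w = v \<or> \<not> E v w} \<subseteq> {w\<in>S. w = v \<or> \<not> E v w}" unfolding S'_def by auto
      then have "tt E S' v \<le> tt E S v" unfolding tt_def
        using Suc.prems(1) by (simp add: card_mono)
      moreover have "tt E S' v > 0" unfolding tt_def
        by (subst card_gt_0_iff) (use v finT in auto)
      ultimately show "1 / real (tt E S v) \<le> 1 / real (tt E S' v)" by (simp add: frac_le)
    qed
    also have "\<dots> \<le> real k"
    proof (rule Suc.IH)
      show "finite S'" by (rule finT)
      show "symS E S'" using Suc.prems(2) by (rule symS_subset) (auto simp: S'_def)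
      show "cliq_le E S' k" unfolding cliq_le_def
      proof (intro allI impI)
        fix C assume C: "C \<subseteq> S'" "clq E C"
        have uC: "u \<notin> C" using C irr unfolding S'_def by auto
        have "clq E (insert u C)" using C Suc.prems(2) u(1) unfolding clq_def S'_def symS_def
          by auto
        moreover have "insert u C \<subseteq> S" using C u(1) unfolding S'_def by auto
        ultimately have "card (insert u C) \<le> Suc k" using Suc.prems(3) unfolding cliq_le_def by blast
        moreover have "finite C" using C finT finite_subset by blast
        ultimately show "card C \<le> k" using uC by simp
      qed
    qed
    finally have sS': "(\<Sum>v\<in>S'. 1 / real (tt E S v)) \<le> real k" .
    have "(\<Sum>v\<in>S. 1 / real (tt E S v)) = (\<Sum>v\<in>T. 1 / real (tt E S v)) + (\<Sum>v\<in>S'. 1 / real (tt E S v))"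
      using ST finT by (simp add: sum.union_disjoint)
    then show ?thesis using sT sS' by simp
  qed
qed

lemma LL_remove:
  assumes "finite S" "a \<in> S" "symS E S"
  shows "LL E S y = LL E (S - {a}) y + 2 * y a * (\<Sum>w\<in>S-{a}. if E a w then y w else 0)"
proof -
  have irr: "\<not> E a a" using assms unfolding symS_def by auto
  let ?h = "\<lambda>u v. if E u v then y u * y v else 0"
  have row: "(\<Sum>v\<in>S. ?h u v) = ?h u a + (\<Sum>v\<in>S-{a}. ?h u v)" for u
    by (rule sum.remove[OF assms(1,2)])
  have "LL E S y = (\<Sum>v\<in>S. ?h a v) + (\<Sum>u\<in>S-{a}. \<Sum>v\<in>S. ?h u v)"
    unfolding LL_def by (rule sum.remove[OF assms(1,2)])
  also have "(\<Sum>u\<in>S-{a}. \<Sum>v\<in>S. ?h u v) = (\<Sum>u\<in>S-{a}. ?h u a + (\<Sum>v\<in>S-{a}. ?h u v))"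
    by (rule sum.cong[OF refl row])
  also have "\<dots> = (\<Sum>u\<in>S-{a}. ?h u a) + LL E (S - {a}) y"
    unfolding LL_def by (rule sum.distrib)
  also have "(\<Sum>v\<in>S. ?h a v) = (\<Sum>v\<in>S-{a}. ?h a v)"
    using row[of a] irr by simp
  also have "(\<Sum>u\<in>S-{a}. ?h u a) = (\<Sum>v\<in>S-{a}. ?h a v)"
    using assms(2,3) unfolding symS_def by (intro sum.cong) (auto simp: mult.commute)
  also have "(\<Sum>v\<in>S-{a}. ?h a v) = y a * (\<Sum>w\<in>S-{a}. if E a w then y w else 0)"
    by (simp add: sum_distrib_left if_distrib cong: if_cong)
  finally show ?thesis by (simp add: algebra_simps)
qed

lemma cs_sum:
  fixes a b :: "nat \<Rightarrow> real"
  shows "(\<Sum>i\<in>I. a i * b i)\<^sup>2 \<le> (\<Sum>i\<in>I. (a i)\<^sup>2) * (\<Sum>i\<in>I. (b i)\<^sup>2)"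
proof (cases "(\<Sum>i\<in>I. (b i)\<^sup>2) > 0")
  case False
  then have "(\<Sum>i\<in>I. (b i)\<^sup>2) = 0" using sum_nonneg[of I "\<lambda>i. (b i)^2"] by simp
  then consider "\<And>i. i\<in>I \<Longrightarrow> b i = 0" | "infinite I"
    using sum_nonneg_eq_0_iff[of I "\<lambda>i. (b i)^2"] by fastforce
  thus ?thesis by cases auto
next
  case True
  define r where "r \<equiv> (\<Sum>i\<in>I. a i * b i) / (\<Sum>i\<in>I. (b i)\<^sup>2)"
  have "0 \<le> (\<Sum>i\<in>I. (a i - r * b i)\<^sup>2)"
    by (simp add: sum_nonneg)
  also have "... = (\<Sum>i\<in>I. (a i)\<^sup>2) - 2 * r * (\<Sum>i\<in>I. a i * b i) + r\<^sup>2 * (\<Sum>i\<in>I. (b i)\<^sup>2)"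
    by (simp add: algebra_simps power2_eq_square sum_distrib_left flip: sum.distrib)
  also have "\<dots> = (\<Sum>i\<in>I. (a i)\<^sup>2) - ((\<Sum>i\<in>I. a i * b i))\<^sup>2 / (\<Sum>i\<in>I. (b i)\<^sup>2)"
    by (simp add: r_def power2_eq_square)
  finally have "((\<Sum>i\<in>I. a i * b i))\<^sup>2 / (\<Sum>i\<in>I. (b i)\<^sup>2) \<le> (\<Sum>i\<in>I. (a i)\<^sup>2)"
    by (simp add: le_diff_eq)
  thus ?thesis by (simp add: pos_divide_le_eq True)
qed

lemma sum_sq_le_card:
  fixes f :: "nat \<Rightarrow> real"
  shows "(\<Sum>i\<in>I. f i)\<^sup>2 \<le> real (card I) * (\<Sum>i\<in>I. (f i)\<^sup>2)"
proof -
  have "(\<Sum>i\<in>I. 1 * f i)\<^sup>2 \<le> (\<Sum>i\<in>I. 1\<^sup>2) * (\<Sum>i\<in>I. (f i)\<^sup>2)" by (rule cs_sum)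
  then show ?thesis by simp
qed

lemma LL_clique:
  assumes "finite S" "\<forall>a\<in>S. \<forall>b\<in>S. a \<noteq> b \<longrightarrow> E a b" "symS E S"
  shows "LL E S y = (\<Sum>u\<in>S. y u)^2 - (\<Sum>u\<in>S. (y u)^2)"
proof -
  have "LL E S y = (\<Sum>u\<in>S. \<Sum>v\<in>S. y u * y v - (if u = v then y u * y v else 0))"
    unfolding LL_def using assms(2,3) unfolding symS_def by (intro sum.cong) auto
  also have "\<dots> = (\<Sum>u\<in>S. y u)^2 - (\<Sum>u\<in>S. (y u)^2)"
    using assms(1)
    by (simp add: sum_subtractf power2_eq_square sum_product sum.delta cong: if_cong)
  finally show ?thesis .
qed

lemma motzkin_straus:
  assumes "finite S" "symS E S" "cliq_le E S k" "k \<ge> 1" "\<forall>u\<in>S. y u \<ge> 0"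
  shows "LL E S y \<le> (1 - 1 / real k) * (\<Sum>u\<in>S. y u)^2"
  using assms
proof (induction "card S" arbitrary: S y rule: less_induct)
  case less
  show ?case
  proof (cases "\<forall>a\<in>S. \<forall>b\<in>S. a \<noteq> b \<longrightarrow> E a b")
    case True
    then have "clq E S" unfolding clq_def by auto
    then have ck: "card S \<le> k" using less.prems(3) unfolding cliq_le_def by auto
    have "(\<Sum>u\<in>S. y u)^2 \<le> real (card S) * (\<Sum>u\<in>S. (y u)^2)" by (rule sum_sq_le_card)
    also have "\<dots> \<le> real k * (\<Sum>u\<in>S. (y u)^2)"
      using ck by (intro mult_right_mono) (auto simp: sum_nonneg)
    finally have h: "(\<Sum>u\<in>S. y u)^2 / real k \<le> (\<Sum>u\<in>S. (y u)^2)"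
      using less.prems(4) by (simp add: divide_le_eq mult.commute)
    have "LL E S y = (\<Sum>u\<in>S. y u)^2 - (\<Sum>u\<in>S. (y u)^2)"
      using LL_clique[OF less.prems(1) True less.prems(2)] .
    also have "\<dots> \<le> (1 - 1 / real k) * (\<Sum>u\<in>S. y u)^2"
      using h by (simp add: algebra_simps)
    finally show ?thesis .
  next
    case False
    then obtain a b where ab: "a \<in> S" "b \<in> S" "a \<noteq> b" "\<not> E a b" by auto
    have ba: "\<not> E b a" using ab less.prems(2) unfolding symS_def by auto
    define A where "A x = (\<Sum>w\<in>S. if E x w then y w else 0)" for x
    have key: "LL E S y \<le> (1 - 1 / real k) * (\<Sum>u\<in>S. y u)^2"
      if uv: "u \<in> S" "v \<in> S" "u \<noteq> v" "\<not> E u v" "\<not> E v u" "A v \<le> A u" for u v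
    proof -
      define y' where "y' = y(u := y u + y v)"
      define S' where "S' = S - {v}"
      have fS: "finite S'" using less.prems(1) unfolding S'_def by auto
      have uS': "u \<in> S'" using uv unfolding S'_def by auto
      have symS': "symS E S'" using less.prems(2) unfolding S'_def by (rule symS_subset) auto
      have irr: "\<not> E u u" "\<not> E v v" using less.prems(2) uv unfolding symS_def by auto
      have Av: "(\<Sum>w\<in>S-{v}. if E v w then y w else 0) = A v"
        unfolding A_def using less.prems(1) uv(2) irr by (simp add: sum.remove)
      have Au: "(\<Sum>w\<in>S'-{u}. if E u w then y w else 0) = A u"
      proof -
        have "A u = (\<Sum>w\<in>S-{v}. if E u w then y w else 0)"
          unfolding A_def using less.prems(1) uv(2,4) by (simp add: sum.remove)
        also have "\<dots> = (\<Sum>w\<in>S'-{u}. if E u w then y w else 0)"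
          unfolding S'_def using less.prems(1) uv irr by (subst sum.remove[of _ u]) auto
        finally show ?thesis by simp
      qed
      have e1: "LL E S y = LL E S' y + 2 * y v * A v"
        using LL_remove[OF less.prems(1) uv(2) less.prems(2), of y] Av unfolding S'_def by simp
      have e2: "LL E S' y = LL E (S' - {u}) y + 2 * y u * A u"
        using LL_remove[OF fS uS' symS', of y] Au by simp
      have e3: "LL E S' y' = LL E (S' - {u}) y' + 2 * y' u * (\<Sum>w\<in>S'-{u}. if E u w then y' w else 0)"
        using LL_remove[OF fS uS' symS', of y'] by simp
      have e4: "LL E (S' - {u}) y' = LL E (S' - {u}) y"
        unfolding LL_def y'_def by (intro sum.cong) auto
      have "(\<Sum>w\<in>S'-{u}. if E u w then y' w else 0) = (\<Sum>w\<in>S'-{u}. if E u w then y w else 0)"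
        unfolding y'_def by (intro sum.cong) auto
      then have e5: "(\<Sum>w\<in>S'-{u}. if E u w then y' w else 0) = A u" using Au by simp
      have "LL E S y \<le> LL E S' y'"
      proof -
        have "y v * A v \<le> y v * A u" using uv(6) less.prems(5) uv(2) by (simp add: mult_left_mono)
        moreover have y'u: "y' u = y u + y v" by (simp add: y'_def)
        ultimately show ?thesis unfolding e1 e2 e3 e4 e5 y'u by (simp add: distrib_right distrib_left)
      qed
      also have "LL E S' y' \<le> (1 - 1 / real k) * (\<Sum>w\<in>S'. y' w)^2"
      proof (rule less.hyps)
        have "card S > 0" using less.prems(1) uv(2) card_gt_0_iff by blast
        then show "card S' < card S" unfolding S'_def using card_Diff_singleton[OF uv(2)] by simp
        show "finite S'" by (rule fS)
        show "symS E S'" by (rule symS')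
        show "cliq_le E S' k" using less.prems(3) by (rule cliq_le_subset) (auto simp: S'_def)
        show "1 \<le> k" by (rule less.prems(4))
        show "\<forall>w\<in>S'. 0 \<le> y' w" using less.prems(5) uv unfolding y'_def S'_def by auto
      qed
      also have "(\<Sum>w\<in>S'. y' w) = (\<Sum>w\<in>S. y w)"
      proof -
        have a1: "(\<Sum>w\<in>S'. y' w) = y' u + (\<Sum>w\<in>S'-{u}. y' w)" using fS uS' by (simp add: sum.remove)
        have a2: "(\<Sum>w\<in>S'-{u}. y' w) = (\<Sum>w\<in>S'-{u}. y w)" unfolding y'_def by (intro sum.cong) auto
        have a3: "(\<Sum>w\<in>S. y w) = y v + (\<Sum>w\<in>S'. y w)"
          unfolding S'_def using less.prems(1) uv(2) by (simp add: sum.remove)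
        have a4: "(\<Sum>w\<in>S'. y w) = y u + (\<Sum>w\<in>S'-{u}. y w)" using fS uS' by (simp add: sum.remove)
        show ?thesis using a1 a2 a3 a4 by (simp add: y'_def)
      qed
      finally show ?thesis .
    qed
    show ?thesis
    proof (cases "A b \<le> A a")
      case True
      then show ?thesis using key[of a b] ab ba by auto
    next
      case False
      then show ?thesis using key[of b a] ab ba by auto
    qed
  qed
qed

lemma sum_if_const: "finite S \<Longrightarrow> (\<Sum>v\<in>S. if P v then (c::real) else 0) = real (card {v\<in>S. P v}) * c"
  by (simp add: sum.If_cases Int_def)

lemma sum_adj_left:
  assumes "finite S"
  shows "(\<Sum>u\<in>S. \<Sum>v\<in>S. if E u v then h u else 0) = (\<Sum>u\<in>S. real (dd E S u) * h u)"
  unfolding dd_def using assms by (intro sum.cong) (auto simp: sum_if_const)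

lemma sum_adj_right:
  assumes "finite S" "symS E S"
  shows "(\<Sum>u\<in>S. \<Sum>v\<in>S. if E u v then h v else 0) = (\<Sum>u\<in>S. real (dd E S u) * h u)"
proof -
  have "(\<Sum>u\<in>S. \<Sum>v\<in>S. if E u v then h v else 0) = (\<Sum>v\<in>S. \<Sum>u\<in>S. if E u v then h v else 0)"
    by (rule sum.swap)
  also have "\<dots> = (\<Sum>v\<in>S. \<Sum>u\<in>S. if E v u then h v else 0)"
    using assms(2) unfolding symS_def by (intro sum.cong) auto
  finally show ?thesis using sum_adj_left[OF assms(1)] by simp
qed

lemma FF_eq:
  assumes "finite S" "symS E S"
  shows "FF E S y = 2 * (\<Sum>u\<in>S. real (dd E S u) * (y u)^2) + 2 * LL E S y"
proof -
  have "FF E S y = (\<Sum>u\<in>S. \<Sum>v\<in>S. (if E u v then (y u)^2 else 0) + (if E u v then (y v)^2 else 0)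
        + 2 * (if E u v then y u * y v else 0))"
    unfolding FF_def by (intro sum.cong) (auto simp: power2_eq_square algebra_simps)
  also have "\<dots> = (\<Sum>u\<in>S. \<Sum>v\<in>S. if E u v then (y u)^2 else 0) + (\<Sum>u\<in>S. \<Sum>v\<in>S. if E u v then (y v)^2 else 0)
        + 2 * LL E S y"
    unfolding LL_def by (simp add: sum.distrib sum_distrib_left)
  also have "\<dots> = 2 * (\<Sum>u\<in>S. real (dd E S u) * (y u)^2) + 2 * LL E S y"
    using sum_adj_left[OF assms(1), of E "\<lambda>u. (y u)^2"] sum_adj_right[OF assms, of "\<lambda>u. (y u)^2"]
    by simp
  finally show ?thesis .
qed

lemma LL_abs: "LL E S y \<le> LL E S (\<lambda>u. \<bar>y u\<bar>)"
  unfolding LL_def by (intro sum_mono) (auto simp: abs_mult[symmetric])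

lemma dd_tt:
  assumes "finite S" "symS E S" "u \<in> S"
  shows "dd E S u + tt E S u = card S"
proof -
  have "\<not> E u u" using assms unfolding symS_def by auto
  then have "{v\<in>S. E u v} \<inter> {v\<in>S. v = u \<or> \<not> E u v} = {}" "{v\<in>S. E u v} \<union> {v\<in>S. v = u \<or> \<not> E u v} = S"
    by auto
  then show ?thesis unfolding dd_def tt_def using assms(1)
    by (metis (no_types, lifting) card_Un_disjoint finite_Un)
qed

lemma tangent_aux:
  fixes t s k K :: real
  assumes "t > 0" "s > 0" "K > 0"
  shows "k / (s * K) + (1/t - k/s) / K^2 = (k * t * K + s - k * t) / (s * t * K^2)"
  using assms by (simp add: field_simps power2_eq_square)

lemma tangent:
  fixes t s k :: real
  assumes "t \<ge> 1" "s > 0" "k \<ge> 2"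
  shows "1 / (t + (1 - 2/k) * s) \<le> k / (s * (k - 1)) + (1/t - k/s) / (k - 1)^2"
proof -
  have k1: "k - 1 > 0" using assms by simp
  define N where "N = k * t * (k - 1) + s - k * t"
  define D where "D = s * t * (k - 1)^2"
  define P where "P = k * t + (k - 2) * s"
  have D0: "D > 0" unfolding D_def using assms k1 by simp
  have "(k - 2) * s \<ge> 0" "k * t > 0" using assms by auto
  then have P0: "P > 0" unfolding P_def by linarith
  have R: "k / (s * (k - 1)) + (1/t - k/s) / (k - 1)^2 = N / D"
    unfolding N_def D_def using tangent_aux[of t s "k - 1" k] assms k1 by simp
  have "t + (1 - 2/k) * s = P / k" unfolding P_def using assms by (simp add: field_simps)
  then have L: "1 / (t + (1 - 2/k) * s) = k / P" by simp
  have id: "N * P - k * D = (k - 2) * (s - k * t)^2"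
    unfolding N_def P_def D_def by (simp add: power2_eq_square algebra_simps)
  have "(k - 2) * (s - k * t)^2 \<ge> 0" using assms by simp
  then have "k * D \<le> N * P" using id by linarith
  then have "k / P \<le> N / D" using D0 P0 by (simp add: divide_simps mult.commute)
  then show ?thesis using R L by simp
qed

lemma weighted_cs:
  fixes z w :: "nat \<Rightarrow> real"
  assumes "\<And>u. u \<in> S \<Longrightarrow> w u > 0"
  shows "(\<Sum>u\<in>S. z u)^2 \<le> (\<Sum>u\<in>S. 1 / w u) * (\<Sum>u\<in>S. w u * (z u)^2)"
proof -
  have "(\<Sum>u\<in>S. z u) = (\<Sum>u\<in>S. (1 / sqrt (w u)) * (sqrt (w u) * z u))"
  proof (intro sum.cong refl)
    fix u assume "u \<in> S"
    then have "w u > 0" by (rule assms)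
    then show "z u = 1 / sqrt (w u) * (sqrt (w u) * z u)" by simp
  qed
  then have "(\<Sum>u\<in>S. z u)^2 \<le> (\<Sum>u\<in>S. (1 / sqrt (w u))^2) * (\<Sum>u\<in>S. (sqrt (w u) * z u)^2)"
    using cs_sum[of "\<lambda>u. 1 / sqrt (w u)" "\<lambda>u. sqrt (w u) * z u" S] by simp
  also have "(\<Sum>u\<in>S. (1 / sqrt (w u))^2) = (\<Sum>u\<in>S. 1 / w u)"
    using assms by (intro sum.cong) (auto simp: power_divide less_imp_le)
  also have "(\<Sum>u\<in>S. (sqrt (w u) * z u)^2) = (\<Sum>u\<in>S. w u * (z u)^2)"
    using assms by (intro sum.cong) (auto simp: power_mult_distrib less_imp_le)
  finally show ?thesis .
qed

lemma tt_pos: "finite S \<Longrightarrow> u \<in> S \<Longrightarrow> tt E S u \<ge> 1"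
  unfolding tt_def by (metis (mono_tags, lifting) One_nat_def Suc_leI card_gt_0_iff empty_iff
      finite_subset mem_Collect_eq subsetI)

lemma spectral_turan:
  assumes fin: "finite S" and sym: "symS E S" and cl: "cliq_le E S k" and k2: "k \<ge> 2"
  shows "FF E S y \<le> 4 * (1 - 1 / real k) * real (card S) * DD S y"
proof -
  define s where "s = real (card S)"
  define c where "c = 1 - 2 / real k"
  define w where "w u = real (tt E S u) + c * s" for u
  have c0: "c \<ge> 0" unfolding c_def using k2 by (simp add: field_simps)
  have s0: "s \<ge> 0" unfolding s_def by simp
  have w0: "w u > 0" if "u \<in> S" for u
  proof -
    have "real (tt E S u) \<ge> 1" using tt_pos[OF fin that] by simp
    moreover have "c * s \<ge> 0" using c0 s0 by simp
    ultimately show ?thesis unfolding w_def by linarith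
  qed
  have kr: "real k \<ge> 2" using k2 by simp
  have sumw: "(1 - 1 / real k) * (\<Sum>u\<in>S. 1 / w u) \<le> 1"
  proof (cases "S = {}")
    case True then show ?thesis by simp
  next
    case False
    then have spos: "s > 0" unfolding s_def using fin by (simp add: card_gt_0_iff)
    have "(\<Sum>u\<in>S. 1 / w u) \<le> (\<Sum>u\<in>S. real k / (s * (real k - 1)) + (1 / real (tt E S u) - real k / s) / (real k - 1)^2)"
    proof (rule sum_mono)
      fix u assume u: "u \<in> S"
      have "real (tt E S u) \<ge> 1" using tt_pos[OF fin u] by simp
      then show "1 / w u \<le> real k / (s * (real k - 1)) + (1 / real (tt E S u) - real k / s) / (real k - 1)^2"
        using tangent[of "real (tt E S u)" s "real k"] spos kr unfolding w_def c_def by simp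
    qed
    also have "\<dots> = s * (real k / (s * (real k - 1))) + ((\<Sum>u\<in>S. 1 / real (tt E S u)) - s * (real k / s)) / (real k - 1)^2"
      unfolding s_def by (simp add: sum.distrib sum_subtractf sum_divide_distrib[symmetric])
    also have "\<dots> = real k / (real k - 1) + ((\<Sum>u\<in>S. 1 / real (tt E S u)) - real k) / (real k - 1)^2"
      using spos by simp
    also have "\<dots> \<le> real k / (real k - 1)"
    proof -
      have "(\<Sum>u\<in>S. 1 / real (tt E S u)) \<le> real k" by (rule caro_wei[OF fin sym cl])
      then have "((\<Sum>u\<in>S. 1 / real (tt E S u)) - real k) / (real k - 1)^2 \<le> 0"
        by (intro divide_nonpos_nonneg) auto
      then show ?thesis by simp
    qed
    finally have "(\<Sum>u\<in>S. 1 / w u) \<le> real k / (real k - 1)" .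
    then have "(1 - 1 / real k) * (\<Sum>u\<in>S. 1 / w u) \<le> (1 - 1 / real k) * (real k / (real k - 1))"
      using kr by (intro mult_left_mono) (auto simp: field_simps)
    also have "\<dots> = 1" using kr by (simp add: field_simps)
    finally show ?thesis .
  qed
  have Wnn: "(\<Sum>u\<in>S. w u * (y u)^2) \<ge> 0" using w0 by (intro sum_nonneg) (simp add: less_imp_le)
  have "LL E S y \<le> LL E S (\<lambda>u. \<bar>y u\<bar>)" by (rule LL_abs)
  also have "\<dots> \<le> (1 - 1 / real k) * (\<Sum>u\<in>S. \<bar>y u\<bar>)^2"
    by (rule motzkin_straus[OF fin sym cl]) (use k2 in auto)
  also have "\<dots> \<le> (1 - 1 / real k) * ((\<Sum>u\<in>S. 1 / w u) * (\<Sum>u\<in>S. w u * (\<bar>y u\<bar>)^2))"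
    using kr by (intro mult_left_mono weighted_cs) (auto simp: w0 field_simps)
  also have "\<dots> = ((1 - 1 / real k) * (\<Sum>u\<in>S. 1 / w u)) * (\<Sum>u\<in>S. w u * (y u)^2)"
    by simp
  also have "\<dots> \<le> 1 * (\<Sum>u\<in>S. w u * (y u)^2)"
    by (rule mult_right_mono[OF sumw Wnn])
  finally have LLb: "LL E S y \<le> (\<Sum>u\<in>S. w u * (y u)^2)" by simp
  have "FF E S y = 2 * (\<Sum>u\<in>S. real (dd E S u) * (y u)^2) + 2 * LL E S y"
    by (rule FF_eq[OF fin sym])
  also have "\<dots> \<le> 2 * (\<Sum>u\<in>S. real (dd E S u) * (y u)^2) + 2 * (\<Sum>u\<in>S. w u * (y u)^2)"
    using LLb by simp
  also have "\<dots> = 2 * (\<Sum>u\<in>S. (real (dd E S u) + w u) * (y u)^2)"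
    by (simp add: sum.distrib distrib_right)
  also have "\<dots> = 2 * (\<Sum>u\<in>S. (s + c * s) * (y u)^2)"
  proof -
    have "real (dd E S u) + w u = s + c * s" if "u \<in> S" for u
      using dd_tt[OF fin sym that] unfolding w_def s_def by (simp add: of_nat_add[symmetric] del: of_nat_add)
    then show ?thesis by (intro arg_cong[where f = "\<lambda>x. 2 * x"] sum.cong) auto
  qed
  also have "\<dots> = 2 * ((s + c * s) * DD S y)"
    unfolding DD_def by (simp add: sum_distrib_left)
  also have "\<dots> = 4 * (1 - 1 / real k) * real (card S) * DD S y"
    unfolding s_def c_def by (simp add: algebra_simps)
  finally show ?thesis .
qed

lemma count_supsets:
  assumes fV: "finite V" and TV: "T \<subseteq> V" and Tm: "card T \<le> m"
  shows "card {M. M \<subseteq> V \<and> card M = m \<and> T \<subseteq> M} = (card V - card T) choose (m - card T)"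
proof -
  have fT: "finite T" using fV TV finite_subset by blast
  define A where "A = {M. M \<subseteq> V \<and> card M = m \<and> T \<subseteq> M}"
  define B where "B = {N. N \<subseteq> V - T \<and> card N = m - card T}"
  have "bij_betw (\<lambda>M. M - T) A B"
  proof (rule bij_betw_imageI)
    show "inj_on (\<lambda>M. M - T) A"
      unfolding A_def by (rule inj_onI) blast
    show "(\<lambda>M. M - T) ` A = B"
    proof
      show "(\<lambda>M. M - T) ` A \<subseteq> B"
      proof
        fix N assume "N \<in> (\<lambda>M. M - T) ` A"
        then obtain M where M: "M \<subseteq> V" "card M = m" "T \<subseteq> M" "N = M - T" unfolding A_def by auto
        have "card (M - T) = card M - card T" by (rule card_Diff_subset[OF fT M(3)])
        then show "N \<in> B" unfolding B_def using M by auto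
      qed
    next
      show "B \<subseteq> (\<lambda>M. M - T) ` A"
      proof
        fix N assume "N \<in> B"
        then have N: "N \<subseteq> V - T" "card N = m - card T" unfolding B_def by auto
        have fN: "finite N" using N(1) fV finite_subset by blast
        have "card (N \<union> T) = card N + card T" using N(1) fN fT by (intro card_Un_disjoint) auto
        then have "card (N \<union> T) = m" using N(2) Tm by simp
        then have "N \<union> T \<in> A" unfolding A_def using N(1) TV by auto
        moreover have "N = (N \<union> T) - T" using N(1) by auto
        ultimately show "N \<in> (\<lambda>M. M - T) ` A" by blast
      qed
    qed
  qed
  then have "card A = card B" by (rule bij_betw_same_card)
  also have "card B = card (V - T) choose (m - card T)"
    unfolding B_def using fV by (intro n_subsets) auto
  also have "card (V - T) = card V - card T" by (rule card_Diff_subset[OF fT TV])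
  finally show ?thesis unfolding A_def .
qed

lemma sum_if_const_nat: "finite S \<Longrightarrow> (\<Sum>v\<in>S. if P v then (c::real) else 0) = real (card {v\<in>S. P v}) * c"
  by (simp add: sum.If_cases Int_def)

lemma sum_subsets_single:
  fixes h :: "nat \<Rightarrow> real" and m :: nat
  assumes fV: "finite V"
  defines "Ms \<equiv> {M. M \<subseteq> V \<and> card M = m}"
  shows "(\<Sum>M\<in>Ms. \<Sum>u\<in>M. h u) = (\<Sum>u\<in>V. h u * real (card {M\<in>Ms. u \<in> M}))"
proof -
  have fMs: "finite Ms" unfolding Ms_def by (rule finite_subset[of _ "Pow V"]) (auto simp: fV)
  have "(\<Sum>M\<in>Ms. \<Sum>u\<in>M. h u) = (\<Sum>M\<in>Ms. \<Sum>u\<in>V. if u \<in> M then h u else 0)"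
  proof (rule sum.cong[OF refl])
    fix M assume "M \<in> Ms"
    then have "V \<inter> M = M" unfolding Ms_def by auto
    then show "(\<Sum>u\<in>M. h u) = (\<Sum>u\<in>V. if u \<in> M then h u else 0)"
      using sum.inter_restrict[OF fV, of h M] by simp
  qed
  also have "\<dots> = (\<Sum>u\<in>V. \<Sum>M\<in>Ms. if u \<in> M then h u else 0)" by (rule sum.swap)
  also have "\<dots> = (\<Sum>u\<in>V. h u * real (card {M\<in>Ms. u \<in> M}))"
    using fMs by (intro sum.cong) (auto simp: sum_if_const_nat)
  finally show ?thesis .
qed

lemma sum_subsets_pair:
  fixes g :: "nat \<Rightarrow> nat \<Rightarrow> real" and m :: nat
  assumes fV: "finite V"
  defines "Ms \<equiv> {M. M \<subseteq> V \<and> card M = m}"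
  shows "(\<Sum>M\<in>Ms. \<Sum>u\<in>M. \<Sum>v\<in>M. g u v) = (\<Sum>u\<in>V. \<Sum>v\<in>V. g u v * real (card {M\<in>Ms. u \<in> M \<and> v \<in> M}))"
proof -
  have fMs: "finite Ms" unfolding Ms_def by (rule finite_subset[of _ "Pow V"]) (auto simp: fV)
  have "(\<Sum>M\<in>Ms. \<Sum>u\<in>M. \<Sum>v\<in>M. g u v) = (\<Sum>M\<in>Ms. \<Sum>u\<in>V. \<Sum>v\<in>V. if u \<in> M \<and> v \<in> M then g u v else 0)"
  proof (rule sum.cong[OF refl])
    fix M assume "M \<in> Ms"
    then have VM: "V \<inter> M = M" unfolding Ms_def by auto
    have "(\<Sum>u\<in>M. \<Sum>v\<in>M. g u v) = (\<Sum>u\<in>V. if u \<in> M then (\<Sum>v\<in>M. g u v) else 0)"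
      using sum.inter_restrict[OF fV, of "\<lambda>u. \<Sum>v\<in>M. g u v" M] VM by simp
    also have "\<dots> = (\<Sum>u\<in>V. \<Sum>v\<in>V. if u \<in> M \<and> v \<in> M then g u v else 0)"
    proof (rule sum.cong[OF refl])
      fix u assume "u \<in> V"
      show "(if u \<in> M then (\<Sum>v\<in>M. g u v) else 0) = (\<Sum>v\<in>V. if u \<in> M \<and> v \<in> M then g u v else 0)"
        using sum.inter_restrict[OF fV, of "\<lambda>v. g u v" M] VM by auto
    qed
    finally show "(\<Sum>u\<in>M. \<Sum>v\<in>M. g u v) = (\<Sum>u\<in>V. \<Sum>v\<in>V. if u \<in> M \<and> v \<in> M then g u v else 0)" .
  qed
  also have "\<dots> = (\<Sum>u\<in>V. \<Sum>M\<in>Ms. \<Sum>v\<in>V. if u \<in> M \<and> v \<in> M then g u v else 0)" by (rule sum.swap)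
  also have "\<dots> = (\<Sum>u\<in>V. \<Sum>v\<in>V. \<Sum>M\<in>Ms. if u \<in> M \<and> v \<in> M then g u v else 0)"
    by (intro sum.cong refl sum.swap)
  also have "\<dots> = (\<Sum>u\<in>V. \<Sum>v\<in>V. g u v * real (card {M\<in>Ms. u \<in> M \<and> v \<in> M}))"
    using fMs by (intro sum.cong refl) (auto simp: sum_if_const_nat)
  finally show ?thesis .
qed

lemma sum_FF_subsets:
  assumes fV: "finite V" and sym: "symS E V" and m2: "m \<ge> 2"
  shows "(\<Sum>M\<in>{M. M \<subseteq> V \<and> card M = m}. FF E M y) = real ((card V - 2) choose (m - 2)) * FF E V y"
proof -
  let ?Ms = "{M. M \<subseteq> V \<and> card M = m}"
  let ?g = "\<lambda>u v. if E u v then (y u + y v)^2 else 0"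
  have "(\<Sum>M\<in>?Ms. FF E M y) = (\<Sum>u\<in>V. \<Sum>v\<in>V. ?g u v * real (card {M\<in>?Ms. u \<in> M \<and> v \<in> M}))"
    unfolding FF_def by (rule sum_subsets_pair[OF fV])
  also have "\<dots> = (\<Sum>u\<in>V. \<Sum>v\<in>V. ?g u v * real ((card V - 2) choose (m - 2)))"
  proof (intro sum.cong refl)
    fix u v assume uv: "u \<in> V" "v \<in> V"
    show "?g u v * real (card {M\<in>?Ms. u \<in> M \<and> v \<in> M}) = ?g u v * real ((card V - 2) choose (m - 2))"
    proof (cases "u = v")
      case True
      then have "\<not> E u v" using sym uv unfolding symS_def by auto
      then show ?thesis by simp
    next
      case False
      have "{M\<in>?Ms. u \<in> M \<and> v \<in> M} = {M. M \<subseteq> V \<and> card M = m \<and> {u, v} \<subseteq> M}" by auto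
      moreover have "card {u, v} = 2" using False by simp
      ultimately have "card {M\<in>?Ms. u \<in> M \<and> v \<in> M} = (card V - 2) choose (m - 2)"
        using count_supsets[OF fV, of "{u,v}" m] uv m2 by simp
      then show ?thesis by simp
    qed
  qed
  also have "\<dots> = real ((card V - 2) choose (m - 2)) * FF E V y"
    unfolding FF_def by (simp add: sum_distrib_left sum_distrib_right mult.commute)
  finally show ?thesis .
qed

lemma sum_DD_subsets:
  assumes fV: "finite V" and m1: "m \<ge> 1"
  shows "(\<Sum>M\<in>{M. M \<subseteq> V \<and> card M = m}. DD M y) = real ((card V - 1) choose (m - 1)) * DD V y"
proof -
  let ?Ms = "{M. M \<subseteq> V \<and> card M = m}"
  have "(\<Sum>M\<in>?Ms. DD M y) = (\<Sum>u\<in>V. (y u)^2 * real (card {M\<in>?Ms. u \<in> M}))"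
    unfolding DD_def by (rule sum_subsets_single[OF fV])
  also have "\<dots> = (\<Sum>u\<in>V. (y u)^2 * real ((card V - 1) choose (m - 1)))"
  proof (intro sum.cong refl)
    fix u assume u: "u \<in> V"
    have "{M\<in>?Ms. u \<in> M} = {M. M \<subseteq> V \<and> card M = m \<and> {u} \<subseteq> M}" by auto
    then have "card {M\<in>?Ms. u \<in> M} = (card V - 1) choose (m - 1)"
      using count_supsets[OF fV, of "{u}" m] u m1 by simp
    then show "(y u)^2 * real (card {M\<in>?Ms. u \<in> M}) = (y u)^2 * real ((card V - 1) choose (m - 1))" by simp
  qed
  also have "\<dots> = real ((card V - 1) choose (m - 1)) * DD V y"
    unfolding DD_def by (simp add: sum_distrib_right mult.commute)
  finally show ?thesis .
qed

lemma good_count: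
  fixes n m k :: nat
  assumes km: "k + 1 \<le> m"
  defines "V \<equiv> {0..<n}"
  shows "card {M\<in>{M. M \<subseteq> V \<and> card M = m}. \<not> cliq_le E M k}
         \<le> clique_count n E (k + 1) * ((n - (k + 1)) choose (m - (k + 1)))"
proof -
  define Cl where "Cl = {S. S \<subseteq> {0..<n} \<and> card S = k + 1 \<and> (\<forall>x\<in>S. \<forall>y\<in>S. x \<noteq> y \<longrightarrow> E x y)}"
  define G where "G = {M\<in>{M. M \<subseteq> V \<and> card M = m}. \<not> cliq_le E M k}"
  have fV: "finite V" unfolding V_def by simp
  have fCl: "finite Cl" unfolding Cl_def by (rule finite_subset[of _ "Pow {0..<n}"]) auto
  have sub: "G \<subseteq> (\<Union>K\<in>Cl. {M. M \<subseteq> V \<and> card M = m \<and> K \<subseteq> M})"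
  proof
    fix M assume "M \<in> G"
    then have M: "M \<subseteq> V" "card M = m" "\<not> cliq_le E M k" unfolding G_def by auto
    then obtain C where C: "C \<subseteq> M" "clq E C" "card C > k" unfolding cliq_le_def by auto
    obtain K where K: "K \<subseteq> C" "card K = k + 1" "finite K"
      using obtain_subset_with_card_n[of "k+1" C] C(3) by auto
    have "\<forall>x\<in>K. \<forall>y\<in>K. x \<noteq> y \<longrightarrow> E x y" using K(1) C(2) unfolding clq_def by blast
    then have "K \<in> Cl" unfolding Cl_def using K C M(1) unfolding V_def by auto
    moreover have "K \<subseteq> M" using K C by auto
    ultimately show "M \<in> (\<Union>K\<in>Cl. {M. M \<subseteq> V \<and> card M = m \<and> K \<subseteq> M})" using M by auto
  qed
  have "card G \<le> card (\<Union>K\<in>Cl. {M. M \<subseteq> V \<and> card M = m \<and> K \<subseteq> M})"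
  proof (rule card_mono[OF _ sub])
    show "finite (\<Union>K\<in>Cl. {M. M \<subseteq> V \<and> card M = m \<and> K \<subseteq> M})"
      using fCl fV by (intro finite_UN_I) (auto intro: finite_subset[of _ "Pow V"])
  qed
  also have "\<dots> \<le> (\<Sum>K\<in>Cl. card {M. M \<subseteq> V \<and> card M = m \<and> K \<subseteq> M})"
    by (rule card_UN_le[OF fCl])
  also have "\<dots> = (\<Sum>K\<in>Cl. (n - (k + 1)) choose (m - (k + 1)))"
  proof (rule sum.cong[OF refl])
    fix K assume "K \<in> Cl"
    then have "K \<subseteq> V" "card K = k + 1" unfolding Cl_def V_def by auto
    then show "card {M. M \<subseteq> V \<and> card M = m \<and> K \<subseteq> M} = (n - (k + 1)) choose (m - (k + 1))"
      using count_supsets[OF fV, of K m] km unfolding V_def by simp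
  qed
  also have "\<dots> = clique_count n E (k + 1) * ((n - (k + 1)) choose (m - (k + 1)))"
    unfolding clique_count_def Cl_def by simp
  finally show ?thesis unfolding G_def .
qed

lemma FF_trivial:
  assumes fin: "finite S" and sym: "symS E S"
  shows "FF E S y \<le> 4 * real (card S) * DD S y"
proof -
  have "LL E S y \<le> (\<Sum>u\<in>S. \<Sum>v\<in>S. if E u v then ((y u)^2 + (y v)^2) / 2 else 0)"
    unfolding LL_def
  proof (intro sum_mono)
    fix u v
    have "y u * y v \<le> ((y u)^2 + (y v)^2) / 2"
      using sum_squares_bound[of "y u" "y v"] by (simp add: power2_eq_square)
    then show "(if E u v then y u * y v else 0) \<le> (if E u v then ((y u)^2 + (y v)^2) / 2 else 0)" by simp
  qed
  also have "\<dots> = (\<Sum>u\<in>S. \<Sum>v\<in>S. (if E u v then (y u)^2 else 0) / 2 + (if E u v then (y v)^2 else 0) / 2)"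
    by (intro sum.cong refl) (auto simp: add_divide_distrib)
  also have "\<dots> = ((\<Sum>u\<in>S. \<Sum>v\<in>S. if E u v then (y u)^2 else 0) + (\<Sum>u\<in>S. \<Sum>v\<in>S. if E u v then (y v)^2 else 0)) / 2"
    by (simp add: sum.distrib sum_divide_distrib add_divide_distrib)
  also have "\<dots> = (\<Sum>u\<in>S. real (dd E S u) * (y u)^2)"
    using sum_adj_left[OF fin, of E "\<lambda>u. (y u)^2"] sum_adj_right[OF fin sym, of "\<lambda>u. (y u)^2"] by simp
  finally have LLb: "LL E S y \<le> (\<Sum>u\<in>S. real (dd E S u) * (y u)^2)" .
  have "(\<Sum>u\<in>S. real (dd E S u) * (y u)^2) \<le> (\<Sum>u\<in>S. real (card S) * (y u)^2)"
  proof (intro sum_mono mult_right_mono)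
    fix u assume "u \<in> S"
    show "real (dd E S u) \<le> real (card S)" unfolding dd_def using fin by (simp add: card_mono)
  qed simp
  also have "\<dots> = real (card S) * DD S y" unfolding DD_def by (simp add: sum_distrib_left)
  finally have "(\<Sum>u\<in>S. real (dd E S u) * (y u)^2) \<le> real (card S) * DD S y" .
  then show ?thesis using FF_eq[OF fin sym, of y] LLb by simp
qed

lemma simple_symS: "simple_graph n E \<Longrightarrow> symS E {0..<n}"
  unfolding simple_graph_def symS_def by auto

lemma eigen_facts:
  assumes sg: "simple_graph n E" and n1: "n \<ge> 1"
    and ev: "eigenvalue (signless_laplacian n E) q"
  shows "\<exists>y. DD {0..<n} y > 0 \<and> FF E {0..<n} y = 2 * q * DD {0..<n} y \<and>
     (\<forall>i\<in>{0..<n}. (q - real (dd E {0..<n} i)) * y i = (\<Sum>j\<in>{0..<n}. if E i j then y j else 0))"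
proof -
  let ?Q = "signless_laplacian n E"
  let ?V = "{0..<n}"
  have Q: "?Q \<in> carrier_mat n n" by (rule SL_carrier)
  obtain x where x: "x \<in> carrier_vec n" "x \<noteq> 0\<^sub>v n" "?Q *\<^sub>v x = q \<cdot>\<^sub>v x"
    using ev Q unfolding eigenvalue_def eigenvector_def by auto
  define y where "y i = x $ i" for i
  have ddeg: "degree n E i = dd E ?V i" for i
    unfolding degree_def dd_def by (rule arg_cong[where f = card]) auto
  have row: "q * y i = real (dd E ?V i) * y i + (\<Sum>j\<in>?V. if E i j then y j else 0)" if i: "i < n" for i
  proof -
    have "(?Q *\<^sub>v x) $ i = q * y i" using x(1,3) i unfolding y_def by simp
    moreover have "(?Q *\<^sub>v x) $ i = (\<Sum>j\<in>?V. ?Q $$ (i,j) * y j)"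
      using i Q x(1) unfolding y_def by (auto simp: scalar_prod_def intro!: sum.cong)
    moreover have "(\<Sum>j\<in>?V. ?Q $$ (i,j) * y j) = (\<Sum>j\<in>?V. (if i = j then real (degree n E i) * y j else 0) + (if E i j then y j else 0))"
      using i by (intro sum.cong) (auto simp: SL_index distrib_right)
    moreover have "\<dots> = real (degree n E i) * y i + (\<Sum>j\<in>?V. if E i j then y j else 0)"
      using i by (simp add: sum.distrib)
    ultimately show ?thesis using ddeg by simp
  qed
  have sym: "symS E ?V" by (rule simple_symS[OF sg])
  have "q * DD ?V y = (\<Sum>i\<in>?V. y i * (q * y i))"
    unfolding DD_def by (simp add: sum_distrib_left power2_eq_square mult.commute mult.left_commute)
  also have "\<dots> = (\<Sum>i\<in>?V. real (dd E ?V i) * (y i)^2 + (\<Sum>j\<in>?V. if E i j then y i * y j else 0))"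
    by (intro sum.cong refl) (auto simp: row distrib_left sum_distrib_left power2_eq_square if_distrib cong: if_cong)
  also have "\<dots> = (\<Sum>i\<in>?V. real (dd E ?V i) * (y i)^2) + LL E ?V y"
    unfolding LL_def by (simp add: sum.distrib)
  finally have R: "q * DD ?V y = (\<Sum>i\<in>?V. real (dd E ?V i) * (y i)^2) + LL E ?V y" .
  have FF: "FF E ?V y = 2 * q * DD ?V y"
    using FF_eq[OF _ sym, of y] R by simp
  obtain i where i: "i < n" "x $ i \<noteq> 0"
    using x(1,2) by (metis carrier_vecD eq_vecI index_zero_vec(1) index_zero_vec(2))
  have "DD ?V y > 0" unfolding DD_def
    by (rule sum_pos2[of _ i]) (use i in \<open>auto simp: y_def\<close>)
  moreover have "\<forall>i\<in>?V. (q - real (dd E ?V i)) * y i = (\<Sum>j\<in>?V. if E i j then y j else 0)"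
    using row by (auto simp: algebra_simps)
  ultimately show ?thesis using FF by blast
qed

theorem theorem2p2:
  fixes k :: nat and \<epsilon> :: real
  assumes "k \<ge> 2" and "\<epsilon> > 0"
  shows "\<exists>c::real. c > 0 \<and> (\<exists>n0::nat. \<forall>n \<ge> n0. \<forall>E :: nat \<Rightarrow> nat \<Rightarrow> bool.
           simple_graph n E \<longrightarrow>
           q_radius n E \<ge> (1 - 1 / real k + \<epsilon>) * (2 * real n) \<longrightarrow>
           real (clique_count n E (k + 1)) \<ge> c * real n ^ (k + 1))"
proof -
  note k2 = assms(1) and ep = assms(2)
  define m :: nat where "m = k + 1 + nat \<lceil>2 + 2 / \<epsilon>\<rceil>"
  define Cmk where "Cmk = real (m choose (k + 1))"
  define c where "c = 2 * real k * \<epsilon>^3 / (real (k + 1) ^ (k + 1) * Cmk)"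
  have km: "k + 1 \<le> m" unfolding m_def by simp
  have m_big: "real m \<ge> 2 + 2 / \<epsilon>" unfolding m_def by linarith
  have Cmk0: "Cmk > 0" unfolding Cmk_def using km by simp
  have kr: "real k \<ge> 2" using k2 by simp
  have c0: "c > 0" unfolding c_def using Cmk0 kr ep by (intro divide_pos_pos mult_pos_pos) auto
  have main: "real (clique_count n E (k + 1)) \<ge> c * real n ^ (k + 1)"
    if n: "n \<ge> m" and sg: "simple_graph n E" and qb: "q_radius n E \<ge> (1 - 1 / real k + \<epsilon>) * (2 * real n)"
    for n E
  proof -
    define V where "V = {0..<n}"
    define q where "q = q_radius n E"
    have n1: "n \<ge> 1" using n km by simp
    have fV: "finite V" and cV: "card V = n" unfolding V_def by auto
    have sym: "symS E V" unfolding V_def by (rule simple_symS[OF sg])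
    obtain y where yX: "DD V y > 0" and yF: "FF E V y = 2 * q * DD V y"
      and yrow: "\<forall>i\<in>V. (q - real (dd E V i)) * y i = (\<Sum>j\<in>V. if E i j then y j else 0)"
      using eigen_facts[OF sg n1 q_radius_eigen[OF sg n1]] unfolding V_def q_def by blast
    define X where "X = DD V y"
    have X0: "X > 0" unfolding X_def by (rule yX)
    have nr: "real n > 0" using n1 by simp
    have q_low: "q \<ge> (1 + 2 * \<epsilon>) * real n"
    proof -
      have "1 / real k \<le> 1 / 2" using kr by (simp add: field_simps)
      then have "(1 + 2 * \<epsilon>) \<le> (1 - 1 / real k + \<epsilon>) * 2" by simp
      then have "(1 + 2 * \<epsilon>) * real n \<le> (1 - 1 / real k + \<epsilon>) * 2 * real n"
        using nr by (intro mult_right_mono) auto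
      moreover have "(1 - 1 / real k + \<epsilon>) * 2 * real n = (1 - 1 / real k + \<epsilon>) * (2 * real n)" by simp
      ultimately show ?thesis using qb unfolding q_def by linarith
    qed
    have entry: "(y i)^2 \<le> X / (4 * \<epsilon>^2 * real n)" if i: "i \<in> V" for i
    proof -
      have "real (dd E V i) \<le> real n" unfolding dd_def using fV cV
        by (metis (no_types, lifting) card_mono mem_Collect_eq of_nat_le_iff subsetI)
      then have gap: "q - real (dd E V i) \<ge> 2 * \<epsilon> * real n" using q_low by (simp add: algebra_simps)
      have "\<bar>\<Sum>j\<in>V. if E i j then y j else 0\<bar> \<le> (\<Sum>j\<in>V. \<bar>y j\<bar>)"
        by (rule order.trans[OF sum_abs]) (intro sum_mono, auto)
      then have "(\<Sum>j\<in>V. if E i j then y j else 0)^2 \<le> (\<Sum>j\<in>V. \<bar>y j\<bar>)^2"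
        by (metis abs_ge_zero power2_abs power_mono)
      also have "\<dots> \<le> real (card V) * (\<Sum>j\<in>V. \<bar>y j\<bar>^2)" by (rule sum_sq_le_card)
      also have "\<dots> = real n * X" unfolding X_def DD_def cV by simp
      finally have h: "((q - real (dd E V i)) * y i)^2 \<le> real n * X" using yrow i by simp
      have "(2 * \<epsilon> * real n)^2 * (y i)^2 \<le> (q - real (dd E V i))^2 * (y i)^2"
        using gap ep nr by (intro mult_right_mono power_mono) auto
      also have "\<dots> \<le> real n * X" using h by (simp add: power_mult_distrib)
      finally have "(4 * \<epsilon>^2 * real n) * (real n * (y i)^2) \<le> real n * X"
        by (simp add: power_mult_distrib power2_eq_square algebra_simps)
      then have "(4 * \<epsilon>^2 * real n) * (y i)^2 \<le> X" using nr
        by (simp add: algebra_simps)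
      then show ?thesis using ep nr by (simp add: field_simps)
    qed
    define bnd where "bnd = real m * X / (4 * \<epsilon>^2 * real n)"
    define Ms where "Ms = {M. M \<subseteq> V \<and> card M = m}"
    define Good where "Good = {M\<in>Ms. \<not> cliq_le E M k}"
    define a where "a = 4 * (1 - 1 / real k)"
    have fMs: "finite Ms" unfolding Ms_def by (rule finite_subset[of _ "Pow V"]) (auto simp: fV)
    have GoodMs: "Good \<subseteq> Ms" unfolding Good_def by auto
    have Dbnd: "DD M y \<le> bnd" if "M \<in> Ms" for M
    proof -
      have "DD M y \<le> (\<Sum>u\<in>M. X / (4 * \<epsilon>^2 * real n))"
        unfolding DD_def using that entry unfolding Ms_def by (intro sum_mono) auto
      also have "\<dots> = bnd" using that unfolding Ms_def bnd_def by simp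
      finally show ?thesis .
    qed
    have Dnn: "DD M y \<ge> 0" for M unfolding DD_def by (intro sum_nonneg) auto
    have Fbnd: "FF E M y \<le> a * real m * DD M y + (if M \<in> Good then (4 - a) * real m * DD M y else 0)"
      if M: "M \<in> Ms" for M
    proof -
      have MV: "M \<subseteq> V" and cM: "card M = m" using M unfolding Ms_def by auto
      have fM: "finite M" using MV fV finite_subset by blast
      have symM: "symS E M" using sym MV by (rule symS_subset)
      show ?thesis
      proof (cases "M \<in> Good")
        case True
        then show ?thesis using FF_trivial[OF fM symM, of y] cM by (simp add: algebra_simps)
      next
        case False
        then have "cliq_le E M k" using M unfolding Good_def by auto
        then show ?thesis using spectral_turan[OF fM symM _ k2, of y] False cM unfolding a_def by simp
      qed
    qed
    define C1 where "C1 = real ((n - 1) choose (m - 1))"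
    define C2 where "C2 = real ((n - 2) choose (m - 2))"
    define Cnm where "Cnm = real (n choose m)"
    define G where "G = real (card Good)"
    have sumF: "(\<Sum>M\<in>Ms. FF E M y) = C2 * (2 * q * X)"
      using sum_FF_subsets[OF fV sym, of m y] km k2 yF unfolding Ms_def C2_def cV X_def by simp
    have sumD: "(\<Sum>M\<in>Ms. DD M y) = C1 * X"
      using sum_DD_subsets[OF fV, of m y] km unfolding Ms_def C1_def cV X_def by simp
    have s1: "(\<Sum>M\<in>Ms. FF E M y) \<le> (\<Sum>M\<in>Ms. a * real m * DD M y + (if M \<in> Good then (4 - a) * real m * DD M y else 0))"
      using Fbnd by (intro sum_mono) auto
    have s2: "(\<Sum>M\<in>Ms. a * real m * DD M y + (if M \<in> Good then (4 - a) * real m * DD M y else 0))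
        = a * real m * (\<Sum>M\<in>Ms. DD M y) + (4 - a) * real m * (\<Sum>M\<in>Good. DD M y)"
    proof -
      have "(\<Sum>M\<in>Ms. (if M \<in> Good then (4 - a) * real m * DD M y else 0)) = (\<Sum>M\<in>Ms \<inter> Good. (4 - a) * real m * DD M y)"
        using fMs by (simp add: sum.inter_restrict)
      also have "Ms \<inter> Good = Good" using GoodMs by auto
      finally show ?thesis by (simp add: sum.distrib sum_distrib_left)
    qed
    have s3: "(\<Sum>M\<in>Good. DD M y) \<le> G * bnd"
    proof -
      have "(\<Sum>M\<in>Good. DD M y) \<le> (\<Sum>M\<in>Good. bnd)" using Dbnd GoodMs by (intro sum_mono) auto
      then show ?thesis unfolding G_def by simp
    qed
    have a4: "4 - a \<ge> 0" unfolding a_def using kr by simp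
    have s4: "(4 - a) * real m * (\<Sum>M\<in>Good. DD M y) \<le> (4 - a) * real m * (G * bnd)"
      using s3 a4 by (intro mult_left_mono) auto
    have step1: "C2 * (2 * q * X) \<le> a * real m * (C1 * X) + (4 - a) * real m * (G * bnd)"
    proof -
      have s2': "(\<Sum>M\<in>Ms. a * real m * DD M y + (if M \<in> Good then (4 - a) * real m * DD M y else 0))
        = a * real m * (C1 * X) + (4 - a) * real m * (\<Sum>M\<in>Good. DD M y)" using s2 sumD by simp
      show ?thesis using s1 s2' s4 sumF by linarith
    qed
    have step2: "C2 * (2 * q) \<le> a * real m * C1 + (4 - a) * real m * G * (real m / (4 * \<epsilon>^2 * real n))"
    proof -
      have "(C2 * (2 * q)) * X \<le> (a * real m * C1 + (4 - a) * real m * G * (real m / (4 * \<epsilon>^2 * real n))) * X"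
        using step1 unfolding bnd_def by (simp add: algebra_simps)
      then show ?thesis using X0 by (simp add: mult_le_cancel_right)
    qed
    have C2n: "C2 * real n \<ge> C1 * (real m - 1)"
    proof -
      have "Suc (n - 2) * ((n - 2) choose (m - 2)) = (Suc (n - 2) choose Suc (m - 2)) * Suc (m - 2)"
        by (rule Suc_times_binomial_eq)
      moreover have "Suc (n - 2) = n - 1" "Suc (m - 2) = m - 1" using n km k2 by auto
      ultimately have "real (n - 1) * C2 = C1 * real (m - 1)" unfolding C1_def C2_def
        by (metis of_nat_mult)
      moreover have "real (n - 1) = real n - 1" "real (m - 1) = real m - 1" using n km by auto
      moreover have "C2 \<ge> 0" unfolding C2_def by simp
      ultimately show ?thesis by (simp add: algebra_simps)
    qed
    have C1n: "real n * C1 = real m * Cnm"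
    proof -
      have "Suc (n - 1) * ((n - 1) choose (m - 1)) = (Suc (n - 1) choose Suc (m - 1)) * Suc (m - 1)"
        by (rule Suc_times_binomial_eq)
      moreover have "Suc (n - 1) = n" "Suc (m - 1) = m" using n km by auto
      ultimately show ?thesis unfolding C1_def Cnm_def by (metis of_nat_mult mult.commute)
    qed
    have C1nn: "C1 \<ge> 0" unfolding C1_def by simp
    have C2nn: "C2 \<ge> 0" unfolding C2_def by simp
    have q2: "2 * q \<ge> (a + 4 * \<epsilon>) * real n"
    proof -
      have "(a + 4 * \<epsilon>) * real n = 2 * ((1 - 1 / real k + \<epsilon>) * (2 * real n))"
        unfolding a_def by (simp add: algebra_simps)
      then show ?thesis using qb unfolding q_def by linarith
    qed
    have a_ge: "a + 4 * \<epsilon> \<ge> 0"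
    proof -
      have "1 / real k \<le> 1" using kr by simp
      then have "a \<ge> 0" unfolding a_def by simp
      then show ?thesis using ep by simp
    qed
    have "C1 * (real m - 1) * (a + 4 * \<epsilon>) \<le> C2 * real n * (a + 4 * \<epsilon>)"
      using C2n a_ge by (intro mult_right_mono) auto
    also have "\<dots> = C2 * ((a + 4 * \<epsilon>) * real n)" by simp
    also have "\<dots> \<le> C2 * (2 * q)" using q2 C2nn by (intro mult_left_mono) auto
    finally have step3: "C1 * (real m - 1) * (a + 4 * \<epsilon>) \<le> a * real m * C1 + (4 - a) * real m * G * (real m / (4 * \<epsilon>^2 * real n))"
      using step2 by linarith
    have mb: "4 * \<epsilon> * (real m - 1) - a \<ge> 2 * \<epsilon> * real m"
    proof -
      have "2 * \<epsilon> * real m \<ge> 2 * \<epsilon> * (2 + 2 / \<epsilon>)" using m_big ep by (intro mult_left_mono) auto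
      also have "2 * \<epsilon> * (2 + 2 / \<epsilon>) = 4 * \<epsilon> + 4" using ep by (simp add: field_simps)
      finally have "2 * \<epsilon> * real m \<ge> 4 * \<epsilon> + 4" .
      moreover have "a \<le> 4" unfolding a_def using kr by simp
      ultimately show ?thesis by (simp add: algebra_simps)
    qed
    have "C1 * (2 * \<epsilon> * real m) \<le> C1 * (4 * \<epsilon> * (real m - 1) - a)"
      using mb C1nn by (intro mult_left_mono) auto
    also have "\<dots> = C1 * (real m - 1) * (a + 4 * \<epsilon>) - a * real m * C1" by (simp add: algebra_simps)
    also have "\<dots> \<le> (4 - a) * real m * G * (real m / (4 * \<epsilon>^2 * real n))" using step3 by linarith
    also have "\<dots> = real m * real m * G / (real k * \<epsilon>^2 * real n)"
    proof -
      have "4 - a = 4 / real k" unfolding a_def by simp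
      moreover have "4 / real k * real m * G * (real m / (4 * \<epsilon>^2 * real n)) = real m * real m * G / (real k * \<epsilon>^2 * real n)"
        using kr ep nr by (simp add: field_simps)
      ultimately show ?thesis by simp
    qed
    finally have step4: "C1 * (2 * \<epsilon> * real m) \<le> real m * real m * G / (real k * \<epsilon>^2 * real n)" .
    have pos: "real k * \<epsilon>^2 * real n > 0" using kr ep nr by simp
    have "(C1 * (2 * \<epsilon> * real m)) * (real k * \<epsilon>^2 * real n) \<le> real m * real m * G"
      using step4 pos by (simp add: le_divide_eq)
    moreover have "(C1 * (2 * \<epsilon> * real m)) * (real k * \<epsilon>^2 * real n) = (real m * real m) * (2 * real k * \<epsilon>^3 * Cnm)"
    proof -
      have "(C1 * (2 * \<epsilon> * real m)) * (real k * \<epsilon>^2 * real n) = 2 * real k * \<epsilon>^3 * real m * (real n * C1)"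
        by (simp add: power2_eq_square power3_eq_cube mult_ac)
      also have "\<dots> = 2 * real k * \<epsilon>^3 * real m * (real m * Cnm)" by (simp only: C1n)
      also have "\<dots> = (real m * real m) * (2 * real k * \<epsilon>^3 * Cnm)" by (simp add: mult_ac)
      finally show ?thesis .
    qed
    ultimately have "(real m * real m) * (2 * real k * \<epsilon>^3 * Cnm) \<le> (real m * real m) * G" by simp
    moreover have "real m * real m > 0" using km by simp
    ultimately have GoodLow: "2 * real k * \<epsilon>^3 * Cnm \<le> G"
      using mult_le_cancel_left_pos by blast
    define cl where "cl = real (clique_count n E (k + 1))"
    define C3 where "C3 = real ((n - (k + 1)) choose (m - (k + 1)))"
    define Cnk where "Cnk = real (n choose (k + 1))"
    have "card Good \<le> clique_count n E (k + 1) * ((n - (k + 1)) choose (m - (k + 1)))"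
      using good_count[OF km, of n E] unfolding Good_def Ms_def V_def by simp
    then have Gup: "G \<le> cl * C3" unfolding G_def cl_def C3_def
      by (simp only: of_nat_mult[symmetric] of_nat_le_iff)
    have "real ((n choose m) * (m choose (k + 1))) = real ((n choose (k + 1)) * ((n - (k + 1)) choose (m - (k + 1))))"
      using choose_mult[OF km n] by simp
    then have cm: "Cnm * Cmk = Cnk * C3" unfolding Cnm_def Cmk_def Cnk_def C3_def by (simp only: of_nat_mult)
    have C3pos: "C3 > 0" unfolding C3_def using n km by simp
    have "(2 * real k * \<epsilon>^3 * Cnk) * C3 = (2 * real k * \<epsilon>^3 * Cnm) * Cmk"
      using cm by (simp add: algebra_simps)
    also have "\<dots> \<le> G * Cmk" using GoodLow Cmk0 by (intro mult_right_mono) auto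
    also have "\<dots> \<le> (cl * C3) * Cmk" using Gup Cmk0 by (intro mult_right_mono) auto
    finally have "(2 * real k * \<epsilon>^3 * Cnk) * C3 \<le> (cl * Cmk) * C3" by (simp add: algebra_simps)
    then have h5: "2 * real k * \<epsilon>^3 * Cnk \<le> cl * Cmk" using C3pos by (simp add: mult_le_cancel_right)
    have "(real n / real (k + 1)) ^ (k + 1) \<le> Cnk"
      unfolding Cnk_def using binomial_ge_n_over_k_pow_k[of "k + 1" n] n km by simp
    then have "real n ^ (k + 1) / real (k + 1) ^ (k + 1) \<le> Cnk" by (simp add: power_divide)
    then have "2 * real k * \<epsilon>^3 * (real n ^ (k + 1) / real (k + 1) ^ (k + 1)) \<le> 2 * real k * \<epsilon>^3 * Cnk"
      using kr ep by (intro mult_left_mono) auto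
    also have "\<dots> \<le> cl * Cmk" by (rule h5)
    finally have h6: "2 * real k * \<epsilon>^3 * (real n ^ (k + 1) / real (k + 1) ^ (k + 1)) \<le> cl * Cmk" .
    have "c * real n ^ (k + 1) = (2 * real k * \<epsilon>^3 * (real n ^ (k + 1) / real (k + 1) ^ (k + 1))) / Cmk"
      unfolding c_def by (simp add: field_simps)
    also have "\<dots> \<le> cl" using h6 Cmk0 by (simp add: divide_le_eq mult_ac)
    finally show ?thesis unfolding cl_def .
  qed
  show ?thesis
    by (rule exI[of _ c], rule conjI[OF c0], rule exI[of _ m]) (use main in blast)
qed

end
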